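(* Let $q\ge1$ be an integer. Suppose there are pairwise disjoint Borel sets $K_0,K_1,K_2$ with $K_0\cup K_1\cup K_2=[0,1)$ and constants $\varepsilon,\delta>0$ such that: (i) for each $x\in K_0$, $e(q,x;\varepsilon,\delta)=1$; (ii) for each $x\in K_1$ there exist $\mathbf{a}_x,\mathbf{b}_x\in\mathcal{A}^q$ with $x(\mathbf{a}_x),x(\mathbf{b}_x)\in K_0$ such that $(\mathbf{a}_x,\mathbf{b}_x)$ and $(\mathbf{b}_x,\mathbf{a}_x)$ are the only possible pairs $(\mathbf{u},\mathbf{v})$ with $\mathbf{u}\ne\mathbf{v}$ in $E(q,x;\varepsilon,\delta)$; (iii) for each $x\in K_2$ there exist $\mathbf{a}_x,\mathbf{b}_x,\mathbf{c}_x\in\mathcal{A}^q$ with $x(\mathbf{a}_x),x(\mathbf{b}_x)\in K_0$ and $x(\mathbf{c}_x)\in K_1$ such that $(\mathbf{a}_x,\mathbf{b}_x),(\mathbf{a}_x,\mathbf{c}_x),(\mathbf{b}_x,\mathbf{a}_x),(\mathbf{c}_x,\mathbf{a}_x)$ are the only possible pairs $(\mathbf{u},\mathbf{v})$ with $\mathbf{u}\ne\mathbf{v}$ in $E(q,x;\varepsilon,\delta)$. Then $\sigma(q)\le t<1.61$, where $t>1$ is the unique solution of $\frac{1}{t^2-1}+\frac{2}{t^3-2}+1=t^2$.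
   Context: Standing setup: $b\ge2$ integer, $\mathcal{A}=\{0,\dots,b-1\}$, $\gamma\in(1/b,1)$, $\psi$ a $\mathbb{Z}$-periodic $C^1$ function. $S(x,\mathbf{i})=\sum_{n\ge1}\gamma^{n-1}\psi\big(\frac{x+i_1+i_2b+\cdots+i_nb^{n-1}}{b^n}\big)$, $S'=\partial_xS$. For $\mathbf{u}\in\mathcal{A}^q$, $x(\mathbf{u})=(x+u_1+u_2b+\cdots+u_qb^{q-1})/b^q$. Sequences $\mathbf{i},\mathbf{j}$ are $(\varepsilon,\delta)$-tangent at $x_0$ if $|S(x_0,\mathbf{i})-S(x_0,\mathbf{j})|\le\varepsilon$ and $|S'(x_0,\mathbf{i})-S'(x_0,\mathbf{j})|\le\delta$. $E(q,x_0;\varepsilon,\delta)$: pairs $(\mathbf{k},\mathbf{l})\in\mathcal{A}^q\times\mathcal{A}^q$ such that some concatenations $\mathbf{ku},\mathbf{lv}$ are $(\varepsilon,\delta)$-tangent at $x_0$; $e(q,x_0;\varepsilon,\delta)=\max_{\mathbf{k}}\#\{\mathbf{l}:(\mathbf{k},\mathbf{l})\in E(q,x_0;\varepsilon,\delta)\}$. Weight function: measurable $\omega:[0,1)\to(0,\infty)$ with $\omega,1/\omega$ bounded. Admissible testing function of order $q$: measurable $V:[0,1)\times\mathcal{A}^q\times\mathcal{A}^q\to[0,\infty)$ such that for some $\varepsilon,\delta>0$, $V(x,\mathbf{u},\mathbf{v})V(x,\mathbf{v},\mathbf{u})\ge1$ whenever $x\in[0,1)$ and $(\mathbf{u},\mathbf{v})\in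 E(q,x;\varepsilon,\delta)$. $\Sigma_{V,\omega}(x)=\sup_{\mathbf{u}}\frac{\omega(x)}{\omega(x(\mathbf{u}))}\sum_{\mathbf{v}}V(x,\mathbf{u},\mathbf{v})$; $\sigma(q)=\inf_{\omega,V}\|\Sigma_{V,\omega}\|_\infty$. *)

theory Defs
  imports "HOL-Analysis.Analysis" "HOL-Probability.Essential_Supremum"
begin

definition standing :: "nat \<Rightarrow> real \<Rightarrow> (real \<Rightarrow> real) \<Rightarrow> bool" where
  "standing b \<gamma> \<psi> \<longleftrightarrow> b \<ge> 2 \<and> 1 / real b < \<gamma> \<and> \<gamma> < 1 \<and>
     (\<forall>x. \<psi> (x + 1) = \<psi> x) \<and>
     (\<exists>\<psi>'. continuous_on UNIV \<psi>' \<and> (\<forall>x. (\<psi> has_real_derivative \<psi>' x) (at x)))"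

text \<open>Infinite sequences over the alphabet {0..b-1}, indexed from 0 (i 0 = i_1).\<close>
definition seqs :: "nat \<Rightarrow> (nat \<Rightarrow> nat) set" where
  "seqs b = {i. \<forall>n. i n < b}"

definition words :: "nat \<Rightarrow> nat \<Rightarrow> nat list set" where
  "words b q = {u. length u = q \<and> set u \<subseteq> {..<b}}"

definition S :: "nat \<Rightarrow> real \<Rightarrow> (real \<Rightarrow> real) \<Rightarrow> real \<Rightarrow> (nat \<Rightarrow> nat) \<Rightarrow> real" where
  "S b \<gamma> \<psi> x i = (\<Sum>n. \<gamma> ^ n * \<psi> ((x + (\<Sum>k\<le>n. real (i k) * real b ^ k)) / real b ^ Suc n))"

definition S' :: "nat \<Rightarrow> real \<Rightarrow> (real \<Rightarrow> real) \<Rightarrow> real \<Rightarrow> (nat \<Rightarrow> nat) \<Rightarrow> real" where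
  "S' b \<gamma> \<psi> x i = deriv (\<lambda>y. S b \<gamma> \<psi> y i) x"

definition xw :: "nat \<Rightarrow> real \<Rightarrow> nat list \<Rightarrow> real" where
  "xw b x u = (x + (\<Sum>k<length u. real (u ! k) * real b ^ k)) / real b ^ length u"

definition cat :: "nat list \<Rightarrow> (nat \<Rightarrow> nat) \<Rightarrow> (nat \<Rightarrow> nat)" where
  "cat k u = (\<lambda>n. if n < length k then k ! n else u (n - length k))"

definition tangent :: "nat \<Rightarrow> real \<Rightarrow> (real \<Rightarrow> real) \<Rightarrow> real \<Rightarrow> real \<Rightarrow> real
    \<Rightarrow> (nat \<Rightarrow> nat) \<Rightarrow> (nat \<Rightarrow> nat) \<Rightarrow> bool" where
  "tangent b \<gamma> \<psi> \<epsilon> \<delta> x0 i j \<longleftrightarrow>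
     \<bar>S b \<gamma> \<psi> x0 i - S b \<gamma> \<psi> x0 j\<bar> \<le> \<epsilon> \<and> \<bar>S' b \<gamma> \<psi> x0 i - S' b \<gamma> \<psi> x0 j\<bar> \<le> \<delta>"

definition Eset :: "nat \<Rightarrow> real \<Rightarrow> (real \<Rightarrow> real) \<Rightarrow> nat \<Rightarrow> real \<Rightarrow> real \<Rightarrow> real
    \<Rightarrow> (nat list \<times> nat list) set" where
  "Eset b \<gamma> \<psi> q x0 \<epsilon> \<delta> = {(k, l). k \<in> words b q \<and> l \<in> words b q \<and>
     (\<exists>u\<in>seqs b. \<exists>v\<in>seqs b. tangent b \<gamma> \<psi> \<epsilon> \<delta> x0 (cat k u) (cat l v))}"

definition e :: "nat \<Rightarrow> real \<Rightarrow> (real \<Rightarrow> real) \<Rightarrow> nat \<Rightarrow> real \<Rightarrow> real \<Rightarrow> real \<Rightarrow> nat" where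
  "e b \<gamma> \<psi> q x0 \<epsilon> \<delta> =
     Max ((\<lambda>k. card {l. (k, l) \<in> Eset b \<gamma> \<psi> q x0 \<epsilon> \<delta>}) ` words b q)"

definition weight :: "(real \<Rightarrow> real) \<Rightarrow> bool" where
  "weight \<omega> \<longleftrightarrow> \<omega> \<in> borel_measurable (restrict_space borel {0..<1}) \<and>
     (\<forall>x\<in>{0..<1}. \<omega> x > 0) \<and> (\<exists>M. \<forall>x\<in>{0..<1}. \<omega> x \<le> M \<and> 1 / \<omega> x \<le> M)"

definition admissible :: "nat \<Rightarrow> real \<Rightarrow> (real \<Rightarrow> real) \<Rightarrow> nat
    \<Rightarrow> (real \<Rightarrow> nat list \<Rightarrow> nat list \<Rightarrow> real) \<Rightarrow> bool" where
  "admissible b \<gamma> \<psi> q V \<longleftrightarrow>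
     (\<forall>u\<in>words b q. \<forall>v\<in>words b q.
        (\<lambda>x. V x u v) \<in> borel_measurable (restrict_space borel {0..<1})) \<and>
     (\<forall>x\<in>{0..<1}. \<forall>u\<in>words b q. \<forall>v\<in>words b q. V x u v \<ge> 0) \<and>
     (\<exists>\<epsilon>>0. \<exists>\<delta>>0. \<forall>x\<in>{0..<1}. \<forall>(u, v)\<in>Eset b \<gamma> \<psi> q x \<epsilon> \<delta>. V x u v * V x v u \<ge> 1)"

definition SigmaVw :: "nat \<Rightarrow> nat \<Rightarrow> (real \<Rightarrow> nat list \<Rightarrow> nat list \<Rightarrow> real) \<Rightarrow> (real \<Rightarrow> real)
    \<Rightarrow> real \<Rightarrow> real" where
  "SigmaVw b q V \<omega> x =
     Max ((\<lambda>u. \<omega> x / \<omega> (xw b x u) * (\<Sum>v\<in>words b q. V x u v)) ` words b q)"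

definition sigma :: "nat \<Rightarrow> real \<Rightarrow> (real \<Rightarrow> real) \<Rightarrow> nat \<Rightarrow> ereal" where
  "sigma b \<gamma> \<psi> q = Inf {esssup (restrict_space lborel {0..<1}) (\<lambda>x. ereal (SigmaVw b q V \<omega> x)) | \<omega> V.
      weight \<omega> \<and> admissible b \<gamma> \<psi> q V}"

end

theory Submission
  imports Defs
begin


definition argn :: "nat \<Rightarrow> nat \<Rightarrow> real \<Rightarrow> (nat \<Rightarrow> nat) \<Rightarrow> real" where
  "argn b n x i = (x + (\<Sum>k\<le>n. real (i k) * real b ^ k)) / real b ^ Suc n"

lemma S_eq: "S b \<gamma> \<psi> x i = (\<Sum>n. \<gamma> ^ n * \<psi> (argn b n x i))"
  unfolding S_def argn_def by simp

lemma digit_sum_bound: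
  assumes "i \<in> seqs b"
  shows "(\<Sum>k\<le>n. real (i k) * real b ^ k) \<le> real b ^ Suc n - 1"
proof (induction n)
  case 0
  have "i 0 < b" using assms by (auto simp: seqs_def)
  then show ?case by simp
next
  case (Suc n)
  have "Suc (i (Suc n)) \<le> b" using assms by (auto simp: seqs_def Suc_le_eq)
  then have "real (Suc (i (Suc n))) \<le> real b" by (rule of_nat_mono)
  then have "real (i (Suc n)) \<le> real b - 1" by simp
  then have "real (i (Suc n)) * real b ^ Suc n \<le> (real b - 1) * real b ^ Suc n"
    by (intro mult_right_mono) auto
  then show ?case using Suc by (simp add: algebra_simps)
qed

lemma argn_bound:
  assumes "i \<in> seqs b" "b \<ge> 1" "\<bar>x\<bar> \<le> R"
  shows "argn b n x i \<in> {-R..R+1}"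
proof -
  define T where "T = (\<Sum>k\<le>n. real (i k) * real b ^ k)"
  define B where "B = real b ^ Suc n"
  have B1: "B \<ge> 1" unfolding B_def using assms(2) by (intro one_le_power) simp
  have T0: "T \<ge> 0" unfolding T_def by (intro sum_nonneg) auto
  have T1: "T \<le> B" using digit_sum_bound[OF assms(1), of n] unfolding T_def B_def by simp
  have "\<bar>x / B\<bar> \<le> R"
  proof -
    have "\<bar>x / B\<bar> = \<bar>x\<bar> / B" using B1 by simp
    also have "\<dots> \<le> \<bar>x\<bar>" using B1 by (simp add: divide_le_eq mult_le_cancel_left1)
    finally show ?thesis using assms(3) by simp
  qed
  then have "-R \<le> x / B" "x / B \<le> R" by (auto simp only: abs_le_iff)
  moreover have "T / B \<ge> 0" "T / B \<le> 1" using T0 T1 B1 by auto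
  moreover have "argn b n x i = x / B + T / B" unfolding argn_def T_def B_def by (simp add: add_divide_distrib)
  ultimately show ?thesis by simp
qed

lemma cont_coord: "continuous_on A (\<lambda>z. snd z k :: nat)" for A :: "(real \<times> (nat \<Rightarrow> nat)) set"
proof -
  have "continuous_on (snd ` A) (\<lambda>i::nat\<Rightarrow>nat. i k)"
    by (rule continuous_on_subset[OF continuous_on_product_coordinates]) simp
  from continuous_on_compose[OF continuous_on_snd this]
  show "continuous_on A (\<lambda>z. snd z k)" by (simp add: o_def)
qed

lemma series_cont:
  fixes \<phi> :: "real \<Rightarrow> real" and w :: "nat \<Rightarrow> real" and R :: real
  assumes phi: "continuous_on UNIV \<phi>" and sw: "summable (\<lambda>n. \<bar>w n\<bar>)" and b: "b \<ge> 1"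
  shows "continuous_on (cball 0 R \<times> seqs b) (\<lambda>z. \<Sum>n. w n * \<phi> (argn b n (fst z) (snd z)))"
proof -
  obtain B where B: "B \<ge> 0" "\<And>y. y \<in> {-R..R+1} \<Longrightarrow> norm (\<phi> y) \<le> B"
    using continuous_on_compact_bound[of "{-R..R+1}" \<phi>] continuous_on_subset[OF phi] by auto
  let ?A = "cball 0 R \<times> seqs b"
  have ul: "uniform_limit ?A (\<lambda>n (z::real \<times> (nat\<Rightarrow>nat)). \<Sum>j<n. w j * \<phi> (argn b j (fst z) (snd z)))
     (\<lambda>z. \<Sum>n. w n * \<phi> (argn b n (fst z) (snd z))) sequentially"
  proof (rule Weierstrass_m_test)
    fix n and z :: "real \<times> (nat\<Rightarrow>nat)" assume z: "z \<in> ?A"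
    then have "argn b n (fst z) (snd z) \<in> {-R..R+1}"
      by (intro argn_bound) (use b in \<open>auto simp: dist_real_def mem_cball\<close>)
    then have "norm (\<phi> (argn b n (fst z) (snd z))) \<le> B" by (rule B)
    then show "norm (w n * \<phi> (argn b n (fst z) (snd z))) \<le> \<bar>w n\<bar> * B"
      by (simp add: abs_mult mult_left_mono)
  next
    show "summable (\<lambda>n. \<bar>w n\<bar> * B)" using sw by (rule summable_mult2)
  qed
  show ?thesis
  proof (rule uniform_limit_theorem[OF _ ul])
    show "\<forall>\<^sub>F n in sequentially. continuous_on ?A (\<lambda>z::real \<times> (nat\<Rightarrow>nat). \<Sum>j<n. w j * \<phi> (argn b j (fst z) (snd z)))"
      unfolding argn_def
      by (intro always_eventually allI continuous_intros continuous_on_compose2[OF phi] cont_coord) (use b in auto)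
  qed simp
qed

lemma S_has_deriv:
  fixes \<psi> \<psi>' :: "real \<Rightarrow> real"
  assumes b: "b \<ge> 1" and g: "0 \<le> \<gamma>" "\<gamma> < 1"
    and d: "\<And>x. (\<psi> has_real_derivative \<psi>' x) (at x)" and c': "continuous_on UNIV \<psi>'"
    and i: "i \<in> seqs b"
  shows "((\<lambda>y. S b \<gamma> \<psi> y i) has_real_derivative
           (\<Sum>n. \<gamma> ^ n / real b ^ Suc n * \<psi>' (argn b n x i))) (at x)"
proof -
  define R where "R = \<bar>x\<bar> + 1"
  have c: "continuous_on UNIV \<psi>"
    by (intro continuous_at_imp_continuous_on ballI DERIV_isCont[OF d])
  obtain C where C: "C \<ge> 0" "\<And>y. y \<in> {-R..R+1} \<Longrightarrow> norm (\<psi> y) \<le> C"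
    using continuous_on_compact_bound[of "{-R..R+1}" \<psi>] continuous_on_subset[OF c] by auto
  obtain C' where C': "C' \<ge> 0" "\<And>y. y \<in> {-R..R+1} \<Longrightarrow> norm (\<psi>' y) \<le> C'"
    using continuous_on_compact_bound[of "{-R..R+1}" \<psi>'] continuous_on_subset[OF c'] by auto
  define f where "f n y = \<gamma> ^ n * \<psi> (argn b n y i)" for n y
  define f' where "f' n y = \<gamma> ^ n * (\<psi>' (argn b n y i) * (1 / real b ^ Suc n))" for n y
  have arg_in: "argn b n y i \<in> {-R..R+1}" if "y \<in> ball 0 R" for n y
    using that by (intro argn_bound[OF i b]) (auto simp: dist_real_def)
  have Bge: "real b ^ Suc n \<ge> 1" for n using b by (intro one_le_power) simp
  have der: "(f n has_field_derivative f' n y) (at y within ball 0 R)" for n y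
  proof -
    have "((\<lambda>y. argn b n y i) has_real_derivative (1 / real b ^ Suc n)) (at y)"
      unfolding argn_def using b by (intro derivative_eq_intros refl) (auto simp: field_simps)
    from DERIV_chain2[OF d this]
    have "((\<lambda>y. \<psi> (argn b n y i)) has_real_derivative \<psi>' (argn b n y i) * (1 / real b ^ Suc n)) (at y)" .
    from DERIV_cmult[OF this, of "\<gamma> ^ n"]
    show ?thesis unfolding f_def f'_def by (rule has_field_derivative_at_within)
  qed
  have sg: "summable (\<lambda>n. \<gamma> ^ n * C')" "summable (\<lambda>n. \<gamma> ^ n * C)"
    using g by (auto intro!: summable_mult2 summable_geometric)
  have uc: "uniformly_convergent_on (ball 0 R) (\<lambda>n y. \<Sum>j<n. f' j y)"
  proof (rule Weierstrass_m_test'[OF _ sg(1)])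
    fix n and y :: real assume y: "y \<in> ball 0 R"
    have "\<bar>\<psi>' (argn b n y i)\<bar> \<le> C'" using C'(2)[OF arg_in[OF y]] by simp
    moreover have "\<bar>\<psi>' (argn b n y i) * (1 / real b ^ Suc n)\<bar> = \<bar>\<psi>' (argn b n y i)\<bar> / real b ^ Suc n"
      using Bge[of n] by (simp add: abs_mult)
    moreover have "\<bar>\<psi>' (argn b n y i)\<bar> / real b ^ Suc n \<le> \<bar>\<psi>' (argn b n y i)\<bar>"
      using Bge[of n] by (simp add: divide_le_eq mult_le_cancel_left1)
    ultimately have "\<bar>\<psi>' (argn b n y i) * (1 / real b ^ Suc n)\<bar> \<le> C'" by linarith
    then have "\<gamma> ^ n * \<bar>\<psi>' (argn b n y i) * (1 / real b ^ Suc n)\<bar> \<le> \<gamma> ^ n * C'"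
      using g by (intro mult_left_mono) auto
    then show "norm (f' n y) \<le> \<gamma> ^ n * C'" unfolding f'_def using g
      by (simp only: real_norm_def abs_mult power_abs)
  qed
  have x0: "x \<in> ball 0 R" by (simp add: R_def dist_real_def)
  have sx: "summable (\<lambda>n. f n x)"
  proof (rule summable_comparison_test'[OF sg(2)])
    fix n show "norm (f n x) \<le> \<gamma> ^ n * C"
      using C(2)[OF arg_in[OF x0]] g unfolding f_def by (simp add: abs_mult mult_left_mono)
  qed
  have "((\<lambda>y. \<Sum>n. f n y) has_field_derivative (\<Sum>n. f' n x)) (at x)"
    by (rule has_field_derivative_series'(2)[OF convex_ball der uc x0 sx]) (simp add: R_def)
  moreover have "(\<lambda>y. \<Sum>n. f n y) = (\<lambda>y. S b \<gamma> \<psi> y i)"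
    unfolding f_def S_eq by simp
  moreover have "(\<Sum>n. f' n x) = (\<Sum>n. \<gamma> ^ n / real b ^ Suc n * \<psi>' (argn b n x i))"
    unfolding f'_def by (rule arg_cong[where f=suminf]) (simp add: fun_eq_iff)
  ultimately show ?thesis by simp
qed

lemma S'_eq:
  fixes \<psi> \<psi>' :: "real \<Rightarrow> real"
  assumes b: "b \<ge> 1" and g: "0 \<le> \<gamma>" "\<gamma> < 1"
    and d: "\<And>x. (\<psi> has_real_derivative \<psi>' x) (at x)" and c': "continuous_on UNIV \<psi>'"
    and i: "i \<in> seqs b"
  shows "S' b \<gamma> \<psi> x i = (\<Sum>n. \<gamma> ^ n / real b ^ Suc n * \<psi>' (argn b n x i))"
  unfolding S'_def by (rule DERIV_imp_deriv[OF S_has_deriv[OF assms]])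

lemma seqs_compact: "compact (seqs b)"
proof -
  have eq: "seqs b = PiE UNIV (\<lambda>_. {..<b})"
    by (auto simp: seqs_def PiE_def Pi_def extensional_def)
  have "compactin (product_topology (\<lambda>_. euclidean) UNIV) (PiE UNIV (\<lambda>_::nat. {..<b::nat}))"
    by (subst compactin_PiE) (auto intro: finite_imp_compact)
  then show ?thesis unfolding eq euclidean_product_topology compactin_euclidean_iff .
qed

lemma cat_seqs: "k \<in> words b q \<Longrightarrow> u \<in> seqs b \<Longrightarrow> cat k u \<in> seqs b"
  by (auto simp: cat_def seqs_def words_def subset_iff)

lemma cat_cont:
  fixes g :: "'a::topological_space \<Rightarrow> nat \<Rightarrow> nat"
  assumes "continuous_on A g"
  shows "continuous_on A (\<lambda>z. cat k (g z))"
proof (rule continuous_on_coordinatewise_then_product)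
  fix n
  show "continuous_on A (\<lambda>z. cat k (g z) n)"
  proof (cases "n < length k")
    case True
    then show ?thesis by (simp add: cat_def)
  next
    case False
    then show ?thesis
      using continuous_on_product_then_coordinatewise[OF assms, of "n - length k"] by (simp add: cat_def)
  qed
qed

lemma S_cat_cont:
  fixes \<psi> :: "real \<Rightarrow> real" and R :: real
  assumes b: "b \<ge> 1" and g: "0 \<le> \<gamma>" "\<gamma> < 1" and c: "continuous_on UNIV \<psi>"
    and k: "k \<in> words b q"
    and h: "continuous_on A h" "h ` A \<subseteq> seqs b" and A: "A \<subseteq> cball 0 R \<times> X"
  shows "continuous_on A (\<lambda>z. S b \<gamma> \<psi> (fst z) (cat k (h z)))"
proof -
  have sc: "continuous_on (cball 0 R \<times> seqs b) (\<lambda>p. \<Sum>n. \<gamma> ^ n * \<psi> (argn b n (fst p) (snd p)))"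
    using g by (intro series_cont[OF c _ b]) (auto intro: summable_geometric)
  have "continuous_on A (\<lambda>z. (fst z, cat k (h z)))"
    by (intro continuous_intros cat_cont h(1))
  moreover have "(\<lambda>z. (fst z, cat k (h z))) ` A \<subseteq> cball 0 R \<times> seqs b"
    using A h(2) cat_seqs[OF k] by force
  ultimately have "continuous_on A (\<lambda>z. (\<lambda>p. \<Sum>n. \<gamma> ^ n * \<psi> (argn b n (fst p) (snd p))) (fst z, cat k (h z)))"
    by (rule continuous_on_compose2[OF sc])
  then show ?thesis by (simp add: S_eq)
qed

lemma S'_cat_cont:
  fixes \<psi> \<psi>' :: "real \<Rightarrow> real" and R :: real
  assumes b: "b \<ge> 1" and g: "0 \<le> \<gamma>" "\<gamma> < 1"
    and d: "\<And>x. (\<psi> has_real_derivative \<psi>' x) (at x)" and c': "continuous_on UNIV \<psi>'"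
    and k: "k \<in> words b q"
    and h: "continuous_on A h" "h ` A \<subseteq> seqs b" and A: "A \<subseteq> cball 0 R \<times> X"
  shows "continuous_on A (\<lambda>z. S' b \<gamma> \<psi> (fst z) (cat k (h z)))"
proof -
  have bb: "real b \<ge> 1" using b by simp
  have sw: "summable (\<lambda>n. \<bar>\<gamma> ^ n / real b ^ Suc n\<bar>)"
  proof (rule summable_comparison_test'[of "\<lambda>n. \<gamma> ^ n"])
    show "summable (\<lambda>n. \<gamma> ^ n)" using g by (intro summable_geometric) auto
  next
    fix n
    have "real b ^ Suc n \<ge> 1" using bb by (rule one_le_power)
    then show "norm \<bar>\<gamma> ^ n / real b ^ Suc n\<bar> \<le> \<gamma> ^ n" using g
      by (simp add: divide_le_eq mult_le_cancel_left1)
  qed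
  have sc: "continuous_on (cball 0 R \<times> seqs b) (\<lambda>p. \<Sum>n. \<gamma> ^ n / real b ^ Suc n * \<psi>' (argn b n (fst p) (snd p)))"
    by (intro series_cont[OF c' sw b])
  have "continuous_on A (\<lambda>z. (fst z, cat k (h z)))"
    by (intro continuous_intros cat_cont h(1))
  moreover have "(\<lambda>z. (fst z, cat k (h z))) ` A \<subseteq> cball 0 R \<times> seqs b"
    using A h(2) cat_seqs[OF k] by force
  ultimately have "continuous_on A (\<lambda>z. (\<lambda>p. \<Sum>n. \<gamma> ^ n / real b ^ Suc n * \<psi>' (argn b n (fst p) (snd p))) (fst z, cat k (h z)))"
    by (rule continuous_on_compose2[OF sc])
  then show ?thesis
  proof (rule continuous_on_cong[THEN iffD1, rotated 2])
    fix z assume "z \<in> A"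
    then have "cat k (h z) \<in> seqs b" using h(2) cat_seqs[OF k] by auto
    then show "(\<lambda>p. \<Sum>n. \<gamma> ^ n / real b ^ Suc n * \<psi>' (argn b n (fst p) (snd p))) (fst z, cat k (h z)) =
       S' b \<gamma> \<psi> (fst z) (cat k (h z))"
      by (simp add: S'_eq[OF b g d c'])
  qed simp
qed

lemma P_borel:
  fixes \<psi> \<psi>' :: "real \<Rightarrow> real"
  assumes b: "b \<ge> 1" and g: "0 \<le> \<gamma>" "\<gamma> < 1"
    and d: "\<And>x. (\<psi> has_real_derivative \<psi>' x) (at x)" and c': "continuous_on UNIV \<psi>'"
    and k: "k \<in> words b q" and l: "l \<in> words b q"
  shows "{x. (k, l) \<in> Eset b \<gamma> \<psi> q x \<epsilon> \<delta>} \<in> sets borel"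
proof -
  have c: "continuous_on UNIV \<psi>"
    by (intro continuous_at_imp_continuous_on ballI DERIV_isCont[OF d])
  define G1 where "G1 z = S b \<gamma> \<psi> (fst z) (cat k (fst (snd z))) - S b \<gamma> \<psi> (fst z) (cat l (snd (snd z)))"
    for z :: "real \<times> (nat \<Rightarrow> nat) \<times> (nat \<Rightarrow> nat)"
  define G2 where "G2 z = S' b \<gamma> \<psi> (fst z) (cat k (fst (snd z))) - S' b \<gamma> \<psi> (fst z) (cat l (snd (snd z)))"
    for z :: "real \<times> (nat \<Rightarrow> nat) \<times> (nat \<Rightarrow> nat)"
  define K where "K R = cball (0::real) (real R) \<times> (seqs b \<times> seqs b)" for R :: nat
  define Q where "Q R = (K R \<inter> G1 -` {-\<epsilon>..\<epsilon>}) \<inter> (K R \<inter> G2 -` {-\<delta>..\<delta>})" for R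
  have hc1: "continuous_on (K R) (\<lambda>z. fst (snd z))" "continuous_on (K R) (\<lambda>z. snd (snd z))" for R
    by (intro continuous_intros)+
  have hm: "(\<lambda>z. fst (snd z)) ` K R \<subseteq> seqs b" "(\<lambda>z. snd (snd z)) ` K R \<subseteq> seqs b" for R
    by (auto simp: K_def)
  have KA: "K R \<subseteq> cball 0 (real R) \<times> (seqs b \<times> seqs b)" for R by (simp add: K_def)
  have cG1: "continuous_on (K R) G1" for R
    unfolding G1_def
    by (intro continuous_intros S_cat_cont[OF b g c k hc1(1) hm(1) KA] S_cat_cont[OF b g c l hc1(2) hm(2) KA])
  have cG2: "continuous_on (K R) G2" for R
    unfolding G2_def
    by (intro continuous_intros S'_cat_cont[OF b g d c' k hc1(1) hm(1) KA] S'_cat_cont[OF b g d c' l hc1(2) hm(2) KA])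
  have Kc: "compact (K R)" for R
    unfolding K_def by (intro compact_Times compact_cball seqs_compact)
  have "compact (Q R)" for R
  proof -
    have "closedin (top_of_set (K R)) (Q R)"
      unfolding Q_def
      by (intro closedin_Int continuous_closedin_preimage cG1 cG2 closed_atLeastAtMost)
    then show ?thesis using Kc closedin_compact by blast
  qed
  then have "compact (fst ` Q R)" for R
    by (intro compact_continuous_image continuous_intros)
  then have QB: "fst ` Q R \<in> sets borel" for R
    by (intro borel_closed compact_imp_closed)
  have eq: "{x. (k, l) \<in> Eset b \<gamma> \<psi> q x \<epsilon> \<delta>} = (\<Union>R. fst ` Q R)"
  proof (intro equalityI subsetI)
    fix x assume "x \<in> {x. (k, l) \<in> Eset b \<gamma> \<psi> q x \<epsilon> \<delta>}"
    then obtain u v where uv: "u \<in> seqs b" "v \<in> seqs b" "tangent b \<gamma> \<psi> \<epsilon> \<delta> x (cat k u) (cat l v)"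
      by (auto simp: Eset_def)
    obtain R :: nat where R: "\<bar>x\<bar> \<le> real R" using real_arch_simple by blast
    have "(x, u, v) \<in> Q R"
      using uv R unfolding Q_def K_def G1_def G2_def tangent_def by (auto simp: abs_le_iff dist_real_def)
    then show "x \<in> (\<Union>R. fst ` Q R)" by force
  next
    fix x assume "x \<in> (\<Union>R. fst ` Q R)"
    then obtain R u v where "(x, u, v) \<in> Q R" by force
    then have "u \<in> seqs b" "v \<in> seqs b" "tangent b \<gamma> \<psi> \<epsilon> \<delta> x (cat k u) (cat l v)"
      unfolding Q_def K_def G1_def G2_def tangent_def by (auto simp: abs_le_iff)
    then show "x \<in> {x. (k, l) \<in> Eset b \<gamma> \<psi> q x \<epsilon> \<delta>}"
      using k l unfolding Eset_def by blast
  qed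
  show ?thesis unfolding eq using QB by (intro sets.countable_UN) auto
qed



definition Ft :: "real \<Rightarrow> real" where
  "Ft s = 1 / (s\<^sup>2 - 1) + 2 / (s ^ 3 - 2) + 1 - s\<^sup>2"

lemma Ft_decr:
  assumes "1 < s" "s ^ 3 > 2" "s < t"
  shows "Ft t < Ft s"
proof -
  have s0: "0 < s" using assms by simp
  have sq: "s\<^sup>2 < t\<^sup>2" using assms s0 by (intro power_strict_mono) auto
  have cu: "s ^ 3 < t ^ 3" using assms s0 by (intro power_strict_mono) auto
  have s1: "s\<^sup>2 - 1 > 0" using assms by (simp add: power2_eq_square) (smt (verit) mult_less_cancel_left1)
  have "1 / (t\<^sup>2 - 1) < 1 / (s\<^sup>2 - 1)" using s1 sq by (intro divide_strict_left_mono) auto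
  moreover have "2 / (t ^ 3 - 2) < 2 / (s ^ 3 - 2)" using assms cu by (intro divide_strict_left_mono) auto
  ultimately show ?thesis unfolding Ft_def using sq by linarith
qed

lemma t_exists: "\<exists>t. 8/5 \<le> t \<and> t < 1.61 \<and> Ft t = 0"
proof -
  have pos: "s\<^sup>2 - 1 > 0" "s ^ 3 - 2 > 0" if "8/5 \<le> s" for s :: real
  proof -
    have "(8/5::real)^2 \<le> s^2" "(8/5::real)^3 \<le> s^3" using that by (intro power_mono; simp)+
    then show "s\<^sup>2 - 1 > 0" "s ^ 3 - 2 > 0" by (simp_all add: power2_eq_square power3_eq_cube)
  qed
  have nz: "s\<^sup>2 \<noteq> 1 \<and> s ^ 3 \<noteq> 2" if "8 \<le> s * 5" for s :: real
  proof -
    have "8/5 \<le> s" using that by simp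
    from pos[OF this] show ?thesis by auto
  qed
  have "continuous_on {8/5..1.61} Ft"
    unfolding Ft_def by (intro continuous_intros) (auto dest: nz)
  moreover have "Ft 1.61 \<le> 0" "0 \<le> Ft (8/5)" by (simp_all add: Ft_def power2_eq_square power3_eq_cube)
  ultimately obtain t where t: "8/5 \<le> t" "t \<le> 1.61" "Ft t = 0"
    using IVT2'[where f=Ft and a="8/5" and b="1.61" and y=0] by auto
  moreover have "Ft 1.61 < 0" by (simp add: Ft_def power2_eq_square power3_eq_cube)
  then have "t \<noteq> 1.61" using t(3) by (metis less_irrefl)
  ultimately show ?thesis by auto
qed



lemma words_finite: "finite (words b q)"
proof -
  have "words b q = {xs. set xs \<subseteq> {..<b} \<and> length xs = q}" by (auto simp: words_def)
  then show ?thesis using finite_lists_length_eq[of "{..<b}" q] by simp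
qed

lemma words_ne: "b > 0 \<Longrightarrow> replicate q 0 \<in> words b q"
  by (auto simp: words_def)

lemma E_sub: "(k, l) \<in> Eset b \<gamma> \<psi> q x \<epsilon> \<delta> \<Longrightarrow> k \<in> words b q \<and> l \<in> words b q"
  by (auto simp: Eset_def)

lemma E_sym: "(k, l) \<in> Eset b \<gamma> \<psi> q x \<epsilon> \<delta> \<Longrightarrow> (l, k) \<in> Eset b \<gamma> \<psi> q x \<epsilon> \<delta>"
  unfolding Eset_def tangent_def by (auto simp: abs_minus_commute)

lemma E_refl:
  assumes "b > 0" "\<epsilon> \<ge> 0" "\<delta> \<ge> 0" "k \<in> words b q"
  shows "(k, k) \<in> Eset b \<gamma> \<psi> q x \<epsilon> \<delta>"
proof -
  have z: "(\<lambda>_::nat. 0::nat) \<in> seqs b" using assms by (simp add: seqs_def)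
  have "tangent b \<gamma> \<psi> \<epsilon> \<delta> x (cat k (\<lambda>_. 0)) (cat k (\<lambda>_. 0))"
    using assms by (simp add: tangent_def)
  then show ?thesis using z assms(4) unfolding Eset_def by blast
qed

lemma fin_digit:
  assumes "\<And>k. k < n \<Longrightarrow> f k < b"
  shows "(\<Sum>k<n. real (f k) * real b ^ k) \<le> real b ^ n - 1"
  using assms
proof (induction n)
  case 0 then show ?case by simp
next
  case (Suc n)
  have "Suc (f n) \<le> b" using Suc.prems[of n] by simp
  then have "real (Suc (f n)) \<le> real b" by (rule of_nat_mono)
  then have "real (f n) \<le> real b - 1" by simp
  then have "real (f n) * real b ^ n \<le> (real b - 1) * real b ^ n"
    by (intro mult_right_mono) auto
  moreover have "(\<Sum>k<n. real (f k) * real b ^ k) \<le> real b ^ n - 1" using Suc by auto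
  ultimately show ?case by (simp add: algebra_simps)
qed

lemma xw_range:
  assumes "x \<in> {0..<1}" "u \<in> words b q" "b \<ge> 1"
  shows "xw b x u \<in> {0..<1}"
proof -
  define T where "T = (\<Sum>k<length u. real (u ! k) * real b ^ k)"
  have T0: "T \<ge> 0" unfolding T_def by (intro sum_nonneg) auto
  have "T \<le> real b ^ length u - 1" unfolding T_def
    using assms(2) by (intro fin_digit) (auto simp: words_def subset_iff)
  moreover have B: "real b ^ length u \<ge> 1" using assms(3) by (intro one_le_power) simp
  ultimately show ?thesis using assms(1) T0 unfolding xw_def T_def[symmetric]
    by (auto simp: divide_simps)
qed

lemma sum_le_two:
  assumes "finite A" "\<And>v. v \<in> A \<Longrightarrow> f v \<le> (if v = c then C else 0) + (if v = d then D else 0)"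
    "C \<ge> 0" "D \<ge> (0::real)"
  shows "sum f A \<le> C + D"
proof -
  have "sum f A \<le> (\<Sum>v\<in>A. (if v = c then C else 0) + (if v = d then D else 0))"
    using assms(2) by (rule sum_mono)
  also have "\<dots> = (if c \<in> A then C else 0) + (if d \<in> A then D else 0)"
    using assms(1) by (simp add: sum.distrib)
  also have "\<dots> \<le> C + D" using assms(3,4) by auto
  finally show ?thesis .
qed

lemma ratio_le:
  fixes wx wy A B Rest R :: real
  assumes "wx = A" "wy = B" "B > 0" "A \<ge> 0" "Rest \<le> R"
  shows "wx / wy * (1 + Rest) \<le> A / B * (1 + R)"
proof -
  have "A / B \<ge> 0" using assms by simp
  then have "A / B * (1 + Rest) \<le> A / B * (1 + R)"
    using mult_left_mono[of "1 + Rest" "1 + R" "A / B"] assms(5) by simp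
  then show ?thesis using assms(1,2) by simp
qed

theorem lemma2p12:
  fixes b q :: nat and \<gamma> \<epsilon> \<delta> :: real and \<psi> :: "real \<Rightarrow> real" and K0 K1 K2 :: "real set"
  assumes std: "standing b \<gamma> \<psi>"
    and q: "q \<ge> 1"
    and Kmeas: "K0 \<in> sets borel" "K1 \<in> sets borel" "K2 \<in> sets borel"
    and Kdisj: "K0 \<inter> K1 = {}" "K0 \<inter> K2 = {}" "K1 \<inter> K2 = {}"
    and Kunion: "K0 \<union> K1 \<union> K2 = {0..<1}"
    and pos: "\<epsilon> > 0" "\<delta> > 0"
    and i: "\<forall>x\<in>K0. e b \<gamma> \<psi> q x \<epsilon> \<delta> = 1"
    and ii: "\<forall>x\<in>K1. \<exists>a\<in>words b q. \<exists>c\<in>words b q.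
               xw b x a \<in> K0 \<and> xw b x c \<in> K0 \<and>
               {(u, v) \<in> Eset b \<gamma> \<psi> q x \<epsilon> \<delta>. u \<noteq> v} \<subseteq> {(a, c), (c, a)}"
    and iii: "\<forall>x\<in>K2. \<exists>a\<in>words b q. \<exists>c\<in>words b q. \<exists>d\<in>words b q.
               xw b x a \<in> K0 \<and> xw b x c \<in> K0 \<and> xw b x d \<in> K1 \<and>
               {(u, v) \<in> Eset b \<gamma> \<psi> q x \<epsilon> \<delta>. u \<noteq> v} \<subseteq> {(a, c), (a, d), (c, a), (d, a)}"
  shows "\<exists>t::real. t > 1 \<and> t ^ 3 > 2 \<and> 1 / (t\<^sup>2 - 1) + 2 / (t ^ 3 - 2) + 1 = t\<^sup>2 \<and>
           (\<forall>s::real. s > 1 \<and> s ^ 3 > 2 \<and> 1 / (s\<^sup>2 - 1) + 2 / (s ^ 3 - 2) + 1 = s\<^sup>2 \<longrightarrow> s = t) \<and>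
           sigma b \<gamma> \<psi> q \<le> ereal t \<and> t < 1.61"
proof -
  from std have b2: "b \<ge> 2" and gb: "1 / real b < \<gamma>" "\<gamma> < 1"
    and "\<exists>\<psi>'. continuous_on UNIV \<psi>' \<and> (\<forall>x. (\<psi> has_real_derivative \<psi>' x) (at x))"
    unfolding standing_def by auto
  then obtain \<psi>' where c': "continuous_on UNIV \<psi>'" and d: "\<And>x. (\<psi> has_real_derivative \<psi>' x) (at x)"
    by blast
  have b1: "b \<ge> 1" and b0: "b > 0" using b2 by auto
  have g0: "0 \<le> \<gamma>" using gb(1) b0 by (smt (verit) divide_pos_pos of_nat_0_less_iff)
  obtain t where t: "8/5 \<le> t" "t < 1.61" "Ft t = 0" using t_exists by blast
  have t1: "t > 1" using t by simp
  have tsq: "t\<^sup>2 \<ge> 2"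
  proof -
    have "(8/5::real)^2 \<le> t^2" using t by (intro power_mono) auto
    then show ?thesis by (simp add: power2_eq_square)
  qed
  have tcu: "t ^ 3 > 2"
  proof -
    have "(8/5::real)^3 \<le> t^3" using t by (intro power_mono) auto
    then show ?thesis by (simp add: power3_eq_cube)
  qed
  have tle2: "t \<le> 2" using t by simp
  have teq: "1 / (t\<^sup>2 - 1) + 2 / (t ^ 3 - 2) + 1 = t\<^sup>2" using t(3) by (simp add: Ft_def)
  have uniq: "\<forall>s::real. s > 1 \<and> s ^ 3 > 2 \<and> 1 / (s\<^sup>2 - 1) + 2 / (s ^ 3 - 2) + 1 = s\<^sup>2 \<longrightarrow> s = t"
  proof (intro allI impI)
    fix s :: real assume s: "s > 1 \<and> s ^ 3 > 2 \<and> 1 / (s\<^sup>2 - 1) + 2 / (s ^ 3 - 2) + 1 = s\<^sup>2"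
    then have Fs: "Ft s = 0" by (simp add: Ft_def)
    show "s = t"
    proof (rule ccontr)
      assume "s \<noteq> t"
      then consider "s < t" | "t < s" by linarith
      then show False
      proof cases
        case 1 then show False using Ft_decr[of s t] s Fs t(3) by auto
      next
        case 2 then show False using Ft_decr[of t s] t1 tcu Fs t(3) by auto
      qed
    qed
  qed
  have sig: "sigma b \<gamma> \<psi> q \<le> ereal t"
  proof -
    define W where "W = words b q"
    define E where "E x = Eset b \<gamma> \<psi> q x \<epsilon> \<delta>" for x
    define \<beta> where "\<beta> = 1 / (t\<^sup>2 - 1)"
    define g where "g = 2 / (t ^ 3 - 2)"
    define PP where "PP u v = {x. (u, v) \<in> E x}" for u v
    define X1 where "X1 v = {x. xw b x v \<in> K1}" for v
    define H where "H u = {x. \<exists>w\<in>W. xw b x w \<in> K1 \<and> (u, w) \<in> E x}" for u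
    define V where "V x u v = (if u = v then 1 else if x \<in> PP u v then
        (if x \<in> K2 then (if x \<in> X1 v then g else if x \<in> X1 u then 1 / g
           else if x \<in> H u then \<beta> else if x \<in> H v then 1 / \<beta> else 1) else 1) else (0::real))"
      for x u v
    define \<omega> where "\<omega> x = (if x \<in> K0 then 1 else if x \<in> K1 then t / 2 else 1 / t)" for x
    have Wfin: "finite W" unfolding W_def by (rule words_finite)
    have Wne: "W \<noteq> {}" using words_ne[OF b0] unfolding W_def by blast
    have t21: "t\<^sup>2 - 1 > 0" using tsq by simp
    have t32: "t ^ 3 - 2 > 0" using tcu by simp
    have \<beta>0: "\<beta> > 0" unfolding \<beta>_def using t21 by simp
    have g0': "g > 0" unfolding g_def using t32 by simp
    have inv\<beta>: "1 / \<beta> = t\<^sup>2 - 1" unfolding \<beta>_def by simp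
    have invg: "1 / g = (t ^ 3 - 2) / 2" unfolding g_def by simp
    have sum\<beta>g: "1 + \<beta> + g = t\<^sup>2" using teq unfolding \<beta>_def g_def by simp
    have Vnn: "V x u v \<ge> 0" for x u v
      unfolding V_def using \<beta>0 g0' by auto
    have \<omega>pos: "\<omega> x > 0" for x unfolding \<omega>_def using t1 by auto
    have \<omega>ge: "\<omega> x \<ge> 1 / t" for x
    proof -
      have "1 / t \<le> 1" using t1 by simp
      moreover have "1 / t \<le> t / 2" using tsq t1 by (simp add: divide_simps power2_eq_square)
      ultimately show ?thesis unfolding \<omega>_def by auto
    qed
    have \<omega>le: "\<omega> x \<le> 1" for x unfolding \<omega>_def using t1 tle2 by auto
    have Esub: "(u, v) \<in> E x \<Longrightarrow> u \<in> W \<and> v \<in> W" for u v x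
      unfolding E_def W_def by (rule E_sub)
    have Esym: "(u, v) \<in> E x \<Longrightarrow> (v, u) \<in> E x" for u v x
      unfolding E_def by (rule E_sym)
    have Erefl: "u \<in> W \<Longrightarrow> (u, u) \<in> E x" for u x
      unfolding E_def W_def using b0 pos by (intro E_refl) auto
    have xwm: "(\<lambda>x. xw b x v) \<in> borel_measurable borel" for v
      unfolding xw_def by measurable
    have PPb: "PP u v \<in> sets borel" if "u \<in> W" "v \<in> W" for u v
      unfolding PP_def E_def using that unfolding W_def
      by (rule P_borel[OF b1 g0 gb(2) d c'])
    have X1b: "X1 v \<in> sets borel" for v
    proof -
      have "X1 v = (\<lambda>x. xw b x v) -` K1" unfolding X1_def by auto
      then show ?thesis using measurable_sets_borel[OF xwm Kmeas(2)] by simp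
    qed
    have Hb: "H u \<in> sets borel" if "u \<in> W" for u
    proof -
      have "H u = (\<Union>w\<in>W. X1 w \<inter> PP u w)" unfolding H_def X1_def PP_def by auto
      moreover have "(\<Union>w\<in>W. X1 w \<inter> PP u w) \<in> sets borel"
        using Wfin X1b PPb that by (intro sets.finite_UN) auto
      ultimately show ?thesis by simp
    qed
    have \<omega>m: "\<omega> \<in> borel_measurable borel"
    proof -
      have "(\<lambda>x. if x \<in> K0 then 1 else if x \<in> K1 then t / 2 else 1 / t) \<in> borel_measurable borel"
        using Kmeas by (intro measurable_If_set measurable_const) auto
      then show ?thesis unfolding \<omega>_def[abs_def] .
    qed
    have Vm: "(\<lambda>x. V x u v) \<in> borel_measurable borel" if "u \<in> W" "v \<in> W" for u v
    proof (cases "u = v")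
      case True then show ?thesis unfolding V_def by simp
    next
      case False
      then have eq: "(\<lambda>x. V x u v) = (\<lambda>x. if x \<in> PP u v then
        (if x \<in> K2 then (if x \<in> X1 v then g else if x \<in> X1 u then 1 / g
           else if x \<in> H u then \<beta> else if x \<in> H v then 1 / \<beta> else 1) else 1) else 0)"
        unfolding V_def by (simp add: fun_eq_iff)
      show ?thesis unfolding eq
        using PPb[OF that] Kmeas X1b Hb that
        by (intro measurable_If_set measurable_const) auto
    qed
    have Sm: "(\<lambda>x. SigmaVw b q V \<omega> x) \<in> borel_measurable borel"
      unfolding SigmaVw_def W_def[symmetric]
    proof (rule borel_measurable_Max[OF Wfin])
      fix u assume u: "u \<in> W"
      have "(\<lambda>x. \<omega> (xw b x u)) \<in> borel_measurable borel"
        by (rule measurable_compose[OF xwm \<omega>m])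
      moreover have "(\<lambda>x. \<Sum>v\<in>W. V x u v) \<in> borel_measurable borel"
        using Vm u by (intro borel_measurable_sum) auto
      ultimately show "(\<lambda>x. \<omega> x / \<omega> (xw b x u) * (\<Sum>v\<in>W. V x u v)) \<in> borel_measurable borel"
        using \<omega>m by (intro borel_measurable_times borel_measurable_divide) auto
    qed
    have wt: "weight \<omega>"
      unfolding weight_def
    proof (intro conjI)
      show "\<omega> \<in> borel_measurable (restrict_space borel {0..<1})"
        by (rule measurable_restrict_space1[OF \<omega>m])
      show "\<forall>x\<in>{0..<1}. 0 < \<omega> x" using \<omega>pos by auto
      show "\<exists>M. \<forall>x\<in>{0..<1}. \<omega> x \<le> M \<and> 1 / \<omega> x \<le> M"
      proof (intro exI ballI conjI)
        fix x :: real
        show "\<omega> x \<le> t" using \<omega>le[of x] t1 by simp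
        show "1 / \<omega> x \<le> t" using \<omega>ge[of x] \<omega>pos[of x] t1
          by (simp add: divide_le_eq) (smt (verit) divide_le_eq mult.commute)
      qed
    qed
    have K2str: "(u, v) \<in> {(a, c), (a, d), (c, a), (d, a)}"
      if "x \<in> K2" "xw b x a \<in> K0" "xw b x c \<in> K0" "xw b x d \<in> K1"
         "{(u, v) \<in> E x. u \<noteq> v} \<subseteq> {(a, c), (a, d), (c, a), (d, a)}"
         "(u, v) \<in> E x" "u \<noteq> v" for x a c d u v
      using that by auto
    have Hc: "x \<notin> H c"
      if "xw b x a \<in> K0" "xw b x c \<in> K0" "xw b x d \<in> K1"
         "{(u, v) \<in> E x. u \<noteq> v} \<subseteq> {(a, c), (a, d), (c, a), (d, a)}" "c \<noteq> a" for x a c d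
    proof
      assume "x \<in> H c"
      then obtain w where w: "w \<in> W" "xw b x w \<in> K1" "(c, w) \<in> E x" unfolding H_def by auto
      have "c \<noteq> w" using w(2) that(2) Kdisj(1) by auto
      then have "(c, w) \<in> {(a, c), (a, d), (c, a), (d, a)}" using w(3) that(4) by auto
      moreover have "c \<noteq> d" using that(2,3) Kdisj(1) by auto
      ultimately have "w = a" using that(5) by auto
      then show False using w(2) that(1) Kdisj(1) by auto
    qed
    have adm: "admissible b \<gamma> \<psi> q V"
      unfolding admissible_def
    proof (intro conjI)
      show "\<forall>u\<in>words b q. \<forall>v\<in>words b q. (\<lambda>x. V x u v) \<in> borel_measurable (restrict_space borel {0..<1})"
        using Vm unfolding W_def by (auto intro: measurable_restrict_space1)
      show "\<forall>x\<in>{0..<1}. \<forall>u\<in>words b q. \<forall>v\<in>words b q. 0 \<le> V x u v" using Vnn by auto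
      show "\<exists>\<epsilon>>0. \<exists>\<delta>>0. \<forall>x\<in>{0..<1}. \<forall>(u, v)\<in>Eset b \<gamma> \<psi> q x \<epsilon> \<delta>. 1 \<le> V x u v * V x v u"
      proof (intro exI conjI ballI)
        show "\<epsilon> > 0" "\<delta> > 0" by (fact pos)+
        fix x p assume x: "x \<in> {0..<1}" and p: "p \<in> Eset b \<gamma> \<psi> q x \<epsilon> \<delta>"
        obtain u v where p': "p = (u, v)" by (cases p)
        have uv: "(u, v) \<in> E x" using p p' unfolding E_def by simp
        have vu: "(v, u) \<in> E x" using Esym[OF uv] .
        have "1 \<le> V x u v * V x v u"
        proof (cases "u = v")
          case True then show ?thesis unfolding V_def by simp
        next
          case uv_ne: False
          have inP: "x \<in> PP u v" "x \<in> PP v u" using uv vu unfolding PP_def by auto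
          show ?thesis
          proof (cases "x \<in> K2")
            case False then show ?thesis using inP uv_ne unfolding V_def by auto
          next
            case True
            then obtain a c d where abcd: "xw b x a \<in> K0" "xw b x c \<in> K0" "xw b x d \<in> K1"
              "{(u, v) \<in> E x. u \<noteq> v} \<subseteq> {(a, c), (a, d), (c, a), (d, a)}"
              using iii unfolding E_def by blast
            have L1: "(u, v) \<in> {(a, c), (a, d), (c, a), (d, a)}" using abcd(4) uv uv_ne by auto
            have ad: "a \<noteq> d" "c \<noteq> d" using abcd(1,2,3) Kdisj(1) by auto
            have aK: "x \<notin> X1 a" "x \<notin> X1 c" "x \<in> X1 d"
              using abcd(1,2,3) Kdisj(1) unfolding X1_def by auto
            have Hc': "c \<noteq> a \<Longrightarrow> x \<notin> H c" using Hc[OF abcd] by blast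
            have "V x u v * V x v u = 1"
              using L1 aK Hc' uv_ne inP True \<beta>0 g0' ad unfolding V_def by auto
            then show ?thesis by simp
          qed
        qed
        then show "case p of (u, v) \<Rightarrow> 1 \<le> V x u v * V x v u" using p' by simp
      qed
    qed
    have bound: "SigmaVw b q V \<omega> x \<le> t" if x: "x \<in> {0..<1}" for x
    proof -
      have "\<forall>u\<in>W. \<omega> x / \<omega> (xw b x u) * (\<Sum>v\<in>W. V x u v) \<le> t"
      proof
        fix u assume u: "u \<in> W"
        define y where "y = xw b x u"
        have y: "y \<in> {0..<1}" unfolding y_def using xw_range[OF x _ b1] u unfolding W_def by blast
        define Rest where "Rest = (\<Sum>v\<in>W-{u}. V x u v)"
        have Rest0: "Rest \<ge> 0" unfolding Rest_def using Vnn by (intro sum_nonneg) auto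
        have sumeq: "(\<Sum>v\<in>W. V x u v) = 1 + Rest"
          unfolding Rest_def using sum.remove[OF Wfin u, of "V x u"] by (simp add: V_def)
        have Vz: "V x u v = 0" if "v \<in> W - {u}" "(u, v) \<notin> E x" for v
          using that unfolding V_def PP_def by auto
        have ratio0: "\<omega> x / \<omega> y \<ge> 0" using \<omega>pos[of x] \<omega>pos[of y] by simp
        have key: "\<omega> x / \<omega> y * (1 + Rest) \<le> t"
        proof -
          have "x \<in> K0 \<or> x \<in> K1 \<or> x \<in> K2" using x Kunion by auto
          then consider (k0) "x \<in> K0" | (k1) "x \<in> K1" | (k2) "x \<in> K2" by blast
          then show ?thesis
          proof cases
            case k0
            have cardle: "card {l. (u, l) \<in> E x} \<le> 1"
            proof -
              have "card {l. (u, l) \<in> E x} \<le> e b \<gamma> \<psi> q x \<epsilon> \<delta>"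
                unfolding e_def E_def using u words_finite unfolding W_def
                by (intro Max_ge) auto
              then show ?thesis using i k0 by simp
            qed
            have "Rest = 0" unfolding Rest_def
            proof (rule sum.neutral, rule ballI)
              fix v assume v: "v \<in> W - {u}"
              have "(u, v) \<notin> E x"
              proof
                assume uv: "(u, v) \<in> E x"
                have fin: "finite {l. (u, l) \<in> E x}"
                  by (rule finite_subset[OF _ Wfin]) (auto dest: Esub)
                have "{u, v} \<subseteq> {l. (u, l) \<in> E x}" using uv Erefl[OF u] by auto
                from card_mono[OF fin this] have "card {u, v} \<le> 1" using cardle by simp
                then show False using v by auto
              qed
              then show "V x u v = 0" using Vz v by blast
            qed
            moreover have "\<omega> x = 1" unfolding \<omega>_def using k0 by simp
            moreover have "1 / \<omega> y \<le> t"
              using \<omega>ge[of y] \<omega>pos[of y] t1 by (simp add: divide_le_eq) (smt (verit) divide_le_eq mult.commute)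
            ultimately show ?thesis by simp
          next
            case k1
            then obtain a c where ac: "a \<in> W" "c \<in> W" "xw b x a \<in> K0" "xw b x c \<in> K0"
              "{(u, v) \<in> E x. u \<noteq> v} \<subseteq> {(a, c), (c, a)}"
              using ii unfolding E_def W_def by blast
            have wx: "\<omega> x = t / 2" unfolding \<omega>_def using k1 Kdisj by auto
            have Vk1: "V x u v = (if (u, v) \<in> E x then 1 else 0)" if "v \<in> W - {u}" for v
              using that k1 Kdisj unfolding V_def PP_def by auto
            show ?thesis
            proof (cases "u = a \<or> u = c")
              case True
              have wy: "\<omega> y = 1" unfolding \<omega>_def y_def using True ac by auto
              have "Rest \<le> 1 + 0" unfolding Rest_def
              proof (rule sum_le_two[where c="if u = a then c else a" and d=u])
                fix v assume v: "v \<in> W - {u}"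
                show "V x u v \<le> (if v = (if u = a then c else a) then 1 else 0) + (if v = u then 0 else 0)"
                proof (cases "(u, v) \<in> E x")
                  case True
                  then have "(u, v) \<in> {(a, c), (c, a)}" using ac(5) v by auto
                  then show ?thesis using Vk1[OF v] True v by auto
                qed (use Vk1[OF v] in auto)
              qed (use Wfin in auto)
              then have "1 + Rest \<le> 2" by simp
              then have le: "t / 2 * (1 + Rest) \<le> t / 2 * 2" by (rule mult_left_mono) (use t1 in simp)
              have "\<omega> x / \<omega> y * (1 + Rest) = t / 2 * (1 + Rest)" using wx wy by simp
              also have "\<dots> \<le> t / 2 * 2" by (rule le)
              finally show ?thesis by simp
            next
              case False
              have "Rest = 0" unfolding Rest_def
              proof (rule sum.neutral, rule ballI)
                fix v assume v: "v \<in> W - {u}"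
                have "(u, v) \<notin> E x" using ac(5) v False by auto
                then show "V x u v = 0" using Vz v by blast
              qed
              moreover have "(t / 2) / \<omega> y \<le> t"
              proof -
                have "1 / 2 \<le> \<omega> y" using \<omega>ge[of y] tle2 t1 by (smt (verit) frac_le)
                then have "t * (1 / 2) \<le> t * \<omega> y" using t1 by (intro mult_left_mono) auto
                then have "t / 2 \<le> t * \<omega> y" by simp
                then show ?thesis using \<omega>pos[of y] by (simp add: divide_le_eq)
              qed
              moreover have "\<omega> x / \<omega> y * (1 + Rest) = (t / 2) / \<omega> y * (1 + Rest)" by (simp only: wx)
              ultimately show ?thesis by simp
            qed
          next
            case k2
            then obtain a c d where acd: "a \<in> W" "c \<in> W" "d \<in> W" "xw b x a \<in> K0" "xw b x c \<in> K0" "xw b x d \<in> K1"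
              "{(u, v) \<in> E x. u \<noteq> v} \<subseteq> {(a, c), (a, d), (c, a), (d, a)}"
              using iii unfolding E_def W_def by blast
            have wx: "\<omega> x = 1 / t" unfolding \<omega>_def using k2 Kdisj by auto
            have ad: "a \<noteq> d" "c \<noteq> d" using acd(4,5,6) Kdisj(1) by auto
            have aK: "x \<notin> X1 a" "x \<notin> X1 c" "x \<in> X1 d"
              using acd(4,5,6) Kdisj(1) unfolding X1_def by auto
            have Hc': "c \<noteq> a \<Longrightarrow> x \<notin> H c" using Hc[OF acd(4-7)] by blast
            have Vk2: "V x u v = (if (u, v) \<in> E x then (if x \<in> X1 v then g else if x \<in> X1 u then 1 / g
                 else if x \<in> H u then \<beta> else if x \<in> H v then 1 / \<beta> else 1) else 0)" if "v \<in> W - {u}" for v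
              using that k2 unfolding V_def PP_def by auto
            have L: "(u, v) \<in> {(a, c), (a, d), (c, a), (d, a)}" if "v \<in> W - {u}" "(u, v) \<in> E x" for v
              using that acd(7) by auto
            consider (ua) "u = a" | (uc) "u = c" "c \<noteq> a" | (ud) "u = d" | (uo) "u \<noteq> a" "u \<noteq> c" "u \<noteq> d"
              by blast
            then show ?thesis
            proof cases
              case ua
              have wy: "\<omega> y = 1" unfolding \<omega>_def y_def using ua acd by auto
              define \<beta>' where "\<beta>' = (if x \<in> H a then \<beta> else 1)"
              define g' where "g' = (if x \<in> H a then g else 0)"
              have "Rest \<le> \<beta>' + g'" unfolding Rest_def
              proof (rule sum_le_two[where c=c and d=d])
                fix v assume v: "v \<in> W - {u}"
                show "V x u v \<le> (if v = c then \<beta>' else 0) + (if v = d then g' else 0)"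
                proof (cases "(u, v) \<in> E x")
                  case True
                  have Ha: "v = d \<Longrightarrow> x \<in> H a" using True ua v acd(3,6) unfolding H_def by auto
                  have "v = c \<or> v = d" using L[OF v True] ua v ad by auto
                  then show ?thesis using Vk2[OF v] True ua v ad aK Ha Hc' \<beta>0 g0'
                    unfolding \<beta>'_def g'_def by auto
                next
                  case False
                  then show ?thesis using Vk2[OF v] \<beta>0 g0' unfolding \<beta>'_def g'_def by auto
                qed
              qed (use Wfin \<beta>0 g0' in \<open>auto simp: \<beta>'_def g'_def\<close>)
              from ratio_le[OF wx wy _ _ this] t1
              have "\<omega> x / \<omega> y * (1 + Rest) \<le> (1 / t) * (1 + \<beta>' + g')" by (simp add: add.assoc)
              also have "\<dots> \<le> t"
              proof (cases "x \<in> H a")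
                case True
                then have "(1 / t) * (1 + \<beta>' + g') = t\<^sup>2 / t" unfolding \<beta>'_def g'_def using sum\<beta>g by simp
                also have "\<dots> = t" by (simp add: power2_eq_square)
                finally show ?thesis by simp
              next
                case False
                then have "(1 / t) * (1 + \<beta>' + g') = 2 / t" unfolding \<beta>'_def g'_def by simp
                also have "\<dots> \<le> t" using tsq t1 by (simp add: divide_le_eq power2_eq_square)
                finally show ?thesis .
              qed
              finally show ?thesis .
            next
              case uc
              have wy: "\<omega> y = 1" unfolding \<omega>_def y_def using uc acd by auto
              have "Rest \<le> (t\<^sup>2 - 1) + 0" unfolding Rest_def
              proof (rule sum_le_two[where c=a and d=a])
                fix v assume v: "v \<in> W - {u}"
                show "V x u v \<le> (if v = a then t\<^sup>2 - 1 else 0) + (if v = a then 0 else 0)"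
                proof (cases "(u, v) \<in> E x")
                  case True
                  have "v = a" using L[OF v True] uc v ad by auto
                  moreover have "(1::real) \<le> t\<^sup>2 - 1" using tsq by simp
                  ultimately show ?thesis using Vk2[OF v] True uc aK Hc' inv\<beta> by auto
                next
                  case False
                  then show ?thesis using Vk2[OF v] t21 by auto
                qed
              qed (use Wfin t21 in auto)
              from ratio_le[OF wx wy _ _ this] t1
              have "\<omega> x / \<omega> y * (1 + Rest) \<le> (1 / t) * t\<^sup>2" by simp
              also have "\<dots> = t" by (simp add: power2_eq_square)
              finally show ?thesis .
            next
              case ud
              have wy: "\<omega> y = t / 2" unfolding \<omega>_def y_def using ud acd Kdisj by auto
              have "Rest \<le> 1 / g + 0" unfolding Rest_def
              proof (rule sum_le_two[where c=a and d=a])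
                fix v assume v: "v \<in> W - {u}"
                show "V x u v \<le> (if v = a then 1 / g else 0) + (if v = a then 0 else 0)"
                proof (cases "(u, v) \<in> E x")
                  case True
                  have "v = a" using L[OF v True] ud v ad by auto
                  then show ?thesis using Vk2[OF v] True ud aK by auto
                next
                  case False
                  then show ?thesis using Vk2[OF v] g0' by auto
                qed
              qed (use Wfin g0' in auto)
              from ratio_le[OF wx wy _ _ this] t1
              have "\<omega> x / \<omega> y * (1 + Rest) \<le> (1 / t) / (t / 2) * (1 + (t ^ 3 - 2) / 2)"
                using invg by simp
              also have "\<dots> = t" using t1 by (simp add: field_simps power3_eq_cube)
              finally show ?thesis .
            next
              case uo
              have "Rest = 0" unfolding Rest_def
              proof (rule sum.neutral, rule ballI)
                fix v assume v: "v \<in> W - {u}"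
                have "(u, v) \<notin> E x" using L[OF v] uo by auto
                then show "V x u v = 0" using Vz v by blast
              qed
              moreover have "(1 / t) / \<omega> y \<le> t"
              proof -
                have h: "1 \<le> \<omega> y * t" using \<omega>ge[of y] t1 by (simp add: divide_le_eq)
                have "(1 / t) / \<omega> y = 1 / (\<omega> y * t)" by simp
                also have "\<dots> \<le> 1" using h by simp
                finally have "(1 / t) / \<omega> y \<le> 1" .
                then show ?thesis using t1 by simp
              qed
              moreover have "\<omega> x / \<omega> y * (1 + Rest) = (1 / t) / \<omega> y * (1 + Rest)" by (simp only: wx)
              ultimately show ?thesis by simp
            qed
          qed
        qed
        then show "\<omega> x / \<omega> (xw b x u) * (\<Sum>v\<in>W. V x u v) \<le> t" using sumeq y_def by simp
      qed
      then show ?thesis unfolding SigmaVw_def W_def[symmetric]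
        using Wfin Wne by (subst Max_le_iff) auto
    qed
    have "esssup (restrict_space lborel {0..<1}) (\<lambda>x. ereal (SigmaVw b q V \<omega> x)) \<le> ereal t"
    proof (rule esssup_I)
      show "(\<lambda>x. ereal (SigmaVw b q V \<omega> x)) \<in> borel_measurable (restrict_space lborel {0..<1})"
        by (intro measurable_restrict_space1 borel_measurable_ereal) (simp add: Sm)
      show "AE x in restrict_space lborel {0..<1}. ereal (SigmaVw b q V \<omega> x) \<le> ereal t"
        using bound by (intro AE_I2) (simp add: space_restrict_space)
    qed
    then show ?thesis unfolding sigma_def using wt adm
      by (intro Inf_lower2[of "esssup (restrict_space lborel {0..<1}) (\<lambda>x. ereal (SigmaVw b q V \<omega> x))"]) blast+
  qed
  show ?thesis using t1 tcu teq uniq sig t(2) by blast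
qed


end
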